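(* If $\mathcal A$ and $\mathcal B$ are two distinct $\sigma$-subfields, then $\|\mathbb P_{\mathcal A}-\mathbb P_{\mathcal B}\|_{L^1\to L^1}\ge1$ and $\|\mathbb P_{\mathcal A}-\mathbb P_{\mathcal B}\|_{L^\infty\to L^\infty}\ge1/2$. Consequently, if $(\mathcal B_n)_{n\in\mathbb N_0}$ are $\sigma$-subfields with $\|\mathbb P_{\mathcal B_n}-\mathbb P_{\mathcal B_0}\|_{L^p\to L^p}\to0$ for $p=1$ or $p=\infty$, then $\mathcal B_n=\mathcal B_0$ for all sufficiently large $n$.
   Context: Let $(\Omega,\mathcal F,\mathbb P)$ be a (not necessarily complete) probability space and $\mathcal N:=\{F\in\mathcal F:\mathbb P(F)=0\}$. A $\sigma$-subfield is a sub-$\sigma$-field $\mathcal A\subset\mathcal F$ with $\mathcal A=\sigma(\mathcal A\cup\mathcal N)$. For a $\sigma$-subfield $\mathcal A$, $\mathbb P_{\mathcal A}f:=\mathbb E^{\mathbb P}[f\mid\mathcal A]$, viewed as a bounded linear operator on the real normed space $L^p(\mathbb P)$; $\|\cdot\|_{L^p\to L^p}$ is the operator norm. *)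

theory Defs
  imports "HOL-Probability.Probability"
begin

definition sigma_subfield :: "'a measure \<Rightarrow> 'a set set \<Rightarrow> bool" where
  "sigma_subfield M A \<longleftrightarrow> A \<subseteq> sets M \<and> sigma_algebra (space M) A
     \<and> A = sigma_sets (space M) (A \<union> null_sets M)"

definition cond_exp_sf :: "'a measure \<Rightarrow> 'a set set \<Rightarrow> ('a \<Rightarrow> real) \<Rightarrow> 'a \<Rightarrow> real" where
  "cond_exp_sf M A f = real_cond_exp M (sigma (space M) A) f"

definition L1_norm :: "'a measure \<Rightarrow> ('a \<Rightarrow> real) \<Rightarrow> ereal" where
  "L1_norm M f = ereal (\<integral>x. \<bar>f x\<bar> \<partial>M)"

definition Linf_norm :: "'a measure \<Rightarrow> ('a \<Rightarrow> real) \<Rightarrow> ereal" where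
  "Linf_norm M f = esssup M (\<lambda>x. ereal \<bar>f x\<bar>)"

definition opnorm_L1 :: "'a measure \<Rightarrow> 'a set set \<Rightarrow> 'a set set \<Rightarrow> ereal" where
  "opnorm_L1 M A B = (SUP f \<in> {f. integrable M f \<and> L1_norm M f \<le> 1}.
      L1_norm M (\<lambda>x. cond_exp_sf M A f x - cond_exp_sf M B f x))"

definition opnorm_Linf :: "'a measure \<Rightarrow> 'a set set \<Rightarrow> 'a set set \<Rightarrow> ereal" where
  "opnorm_Linf M A B = (SUP f \<in> {f. f \<in> borel_measurable M \<and> Linf_norm M f \<le> 1}.
      Linf_norm M (\<lambda>x. cond_exp_sf M A f x - cond_exp_sf M B f x))"

end

theory Submission
  imports Defs
begin

lemma sf_basic:
  assumes P: "prob_space M" and A: "sigma_subfield M A"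
  shows "sets (sigma (space M) A) = A" "space (sigma (space M) A) = space M"
    "subalgebra M (sigma (space M) A)" "sigma_finite_subalgebra M (sigma (space M) A)"
proof -
  have A1: "A \<subseteq> sets M" and A2: "sigma_algebra (space M) A" using A unfolding sigma_subfield_def by auto
  have "A \<subseteq> Pow (space M)" using A1 sets.sets_into_space by blast
  then show s: "sets (sigma (space M) A) = A"
    using sigma_algebra.sigma_sets_eq[OF A2] by (simp add: sets_measure_of)
  show sp: "space (sigma (space M) A) = space M" by (simp add: space_measure_of_conv)
  show sub: "subalgebra M (sigma (space M) A)" unfolding subalgebra_def using s sp A1 by auto
  interpret prob_space M by (rule P)
  have "finite_measure_subalgebra M (sigma (space M) A)"
    by (simp add: finite_measure_subalgebra_def finite_measure_subalgebra_axioms_def sub finite_measure_axioms)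
  then show "sigma_finite_subalgebra M (sigma (space M) A)"
    by (rule finite_measure_subalgebra_is_sigma_finite)
qed

lemma null_in_sf:
  assumes A: "sigma_subfield M A" and N: "N \<in> null_sets M"
  shows "N \<in> A"
proof -
  have "N \<in> sigma_sets (space M) (A \<union> null_sets M)" using N by (intro sigma_sets.Basic) auto
  then show ?thesis using A unfolding sigma_subfield_def by auto
qed

lemma opnorm_sym:
  "opnorm_L1 M A B = opnorm_L1 M B A" "opnorm_Linf M A B = opnorm_Linf M B A"
  unfolding opnorm_L1_def opnorm_Linf_def L1_norm_def Linf_norm_def
  by (simp_all add: abs_minus_commute)

context prob_space
begin

lemma core:
  assumes A: "sigma_subfield M A" and B: "sigma_subfield M B"
  and s_meas: "s \<in> borel_measurable (sigma (space M) A)" and s_bd: "\<And>x. \<bar>s x\<bar> \<le> 1"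
  and D: "D \<in> sets M" "prob D > 0"
  and onD: "AE x in M. x \<in> D \<longrightarrow> s x = 1 \<and> real_cond_exp M (sigma (space M) B) s x \<le> 0"
  shows "opnorm_L1 M A B \<ge> 1 \<and> opnorm_Linf M A B \<ge> 1/2"
proof -
  interpret SA: sigma_finite_subalgebra M "sigma (space M) A" using sf_basic[OF prob_space_axioms A] by auto
  interpret SB: sigma_finite_subalgebra M "sigma (space M) B" using sf_basic[OF prob_space_axioms B] by auto
  have sM[measurable]: "s \<in> borel_measurable M"
    using measurable_from_subalg[OF SA.subalg s_meas] .
  have s_int: "integrable M s" by (rule integrable_const_bound[where B=1]) (use s_bd in auto)
  define k where "k = real_cond_exp M (sigma (space M) B) s"
  have kM[measurable]: "k \<in> borel_measurable M" unfolding k_def by (rule borel_measurable_cond_exp2)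
  have kB: "k \<in> borel_measurable (sigma (space M) B)" unfolding k_def by (rule borel_measurable_cond_exp)
  have k_int: "integrable M k" unfolding k_def using SB.real_cond_exp_int(1)[OF s_int] .
  have aeA: "AE x in M. real_cond_exp M (sigma (space M) A) s x = s x"
    by (rule SA.real_cond_exp_F_meas[OF s_int s_meas])
  define p where "p = prob D"
  have p0: "p > 0" using D p_def by auto
  have Linf: "opnorm_Linf M A B \<ge> 1/2"
  proof -
    define g where "g = (\<lambda>x. cond_exp_sf M A s x - cond_exp_sf M B s x)"
    have gM[measurable]: "g \<in> borel_measurable M" unfolding g_def cond_exp_sf_def
      using borel_measurable_cond_exp2 borel_measurable_cond_exp2 by measurable
    have "Linf_norm M s \<le> 1" unfolding Linf_norm_def
      by (rule esssup_I) (use s_bd in auto)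
    then have "Linf_norm M g \<le> opnorm_Linf M A B" unfolding opnorm_Linf_def g_def
      by (intro SUP_upper) auto
    moreover have "Linf_norm M g \<ge> 1"
    proof (rule ccontr)
      assume "\<not> Linf_norm M g \<ge> 1"
      then have lt: "esssup M (\<lambda>x. ereal \<bar>g x\<bar>) < 1" unfolding Linf_norm_def by auto
      have "AE x in M. x \<notin> D"
        using esssup_AE[of "\<lambda>x. ereal \<bar>g x\<bar>" M] aeA onD
      proof eventually_elim
        case (elim x)
        show ?case
        proof
          assume "x \<in> D"
          then have "g x \<ge> 1" using elim unfolding g_def cond_exp_sf_def by auto
          then have e1: "(1::ereal) \<le> ereal \<bar>g x\<bar>" by simp
          show False using order_trans[OF e1 elim(1)] lt by (simp add: not_le[symmetric])
        qed
      qed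
      then have "emeasure M D = 0"
        using AE_iff_measurable[OF D(1), of "\<lambda>x. x \<notin> D"] sets.sets_into_space[OF D(1)] by auto
      then show False using p0 p_def by (simp add: measure_def)
    qed
    moreover have "(1/2::ereal) \<le> 1" by (simp add: divide_ereal_def)
    ultimately show ?thesis by (meson order.trans)
  qed
  have L1: "opnorm_L1 M A B \<ge> 1"
  proof -
    define f where "f = (\<lambda>x. indicator D x / p)"
    have fM[measurable]: "f \<in> borel_measurable M" unfolding f_def using D(1) by measurable
    have f_int: "integrable M f" unfolding f_def using D(1) by (intro integrable_divide integrable_real_indicator) (auto simp: less_top[symmetric])
    have f_nn: "\<And>x. f x \<ge> 0" unfolding f_def using p0 by simp
    have intf: "(\<integral>x. f x \<partial>M) = 1" unfolding f_def using p0 D(1)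
      by (simp add: p_def Int_absorb2 sets.sets_into_space)
    have "L1_norm M f = 1" unfolding L1_norm_def using f_nn intf by simp
    define a where "a = real_cond_exp M (sigma (space M) A) f"
    define b where "b = real_cond_exp M (sigma (space M) B) f"
    have aM[measurable]: "a \<in> borel_measurable M" unfolding a_def by (rule borel_measurable_cond_exp2)
    have bM[measurable]: "b \<in> borel_measurable M" unfolding b_def by (rule borel_measurable_cond_exp2)
    have bB: "b \<in> borel_measurable (sigma (space M) B)" unfolding b_def by (rule borel_measurable_cond_exp)
    have a_int: "integrable M a" unfolding a_def using SA.real_cond_exp_int(1)[OF f_int] .
    have b_int: "integrable M b" unfolding b_def using SB.real_cond_exp_int(1)[OF f_int] .
    have "L1_norm M (\<lambda>x. a x - b x) \<le> opnorm_L1 M A B" unfolding opnorm_L1_def a_def b_def cond_exp_sf_def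
      using f_int \<open>L1_norm M f = 1\<close> by (intro SUP_upper) auto
    have sbnd: "\<And>x y. \<bar>s x * y\<bar> \<le> \<bar>y\<bar>"
    proof -
      fix x y
      have "\<bar>s x\<bar> * \<bar>y\<bar> \<le> 1 * \<bar>y\<bar>" by (rule mult_right_mono[OF s_bd]) simp
      then show "\<bar>s x * y\<bar> \<le> \<bar>y\<bar>" by (simp add: abs_mult)
    qed
    have ab_int: "integrable M (\<lambda>x. a x - b x)" using a_int b_int by auto
    have sab_int: "integrable M (\<lambda>x. s x * (a x - b x))"
      by (rule Bochner_Integration.integrable_bound[OF ab_int]) (use sbnd in auto)
    have sf_int: "integrable M (\<lambda>x. s x * f x)"
      by (rule Bochner_Integration.integrable_bound[OF f_int]) (use sbnd in auto)
    have sa_int: "integrable M (\<lambda>x. s x * a x)"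
      by (rule Bochner_Integration.integrable_bound[OF a_int]) (use sbnd in auto)
    have sb_int: "integrable M (\<lambda>x. s x * b x)"
      by (rule Bochner_Integration.integrable_bound[OF b_int]) (use sbnd in auto)
    have bs_int: "integrable M (\<lambda>x. b x * s x)" using sb_int by (simp add: mult.commute)
    have kp_int: "integrable M (\<lambda>x. k x / p)" using k_int by auto
    have kf_int: "integrable M (\<lambda>x. k x * f x)"
    proof (rule Bochner_Integration.integrable_bound[OF kp_int])
      show "AE x in M. norm (k x * f x) \<le> norm (k x / p)"
        using p0 by (auto simp: f_def abs_mult indicator_def)
    qed measurable
    have i1: "(\<integral>x. s x * (a x - b x) \<partial>M) \<le> (\<integral>x. \<bar>a x - b x\<bar> \<partial>M)"
      by (rule integral_mono[OF sab_int]) (use ab_int sbnd in \<open>auto intro: order_trans[OF abs_ge_self]\<close>)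
    have i2: "(\<integral>x. s x * a x \<partial>M) = (\<integral>x. s x * f x \<partial>M)"
      unfolding a_def by (rule SA.real_cond_exp_intg(2)[OF sf_int s_meas fM])
    have i3: "(\<integral>x. b x * k x \<partial>M) = (\<integral>x. b x * s x \<partial>M)"
      unfolding k_def by (rule SB.real_cond_exp_intg(2)[OF bs_int bB sM])
    have i4: "(\<integral>x. k x * b x \<partial>M) = (\<integral>x. k x * f x \<partial>M)"
      unfolding b_def by (rule SB.real_cond_exp_intg(2)[OF kf_int kB fM])
    have kb_eq: "(\<integral>x. s x * b x \<partial>M) = (\<integral>x. k x * f x \<partial>M)"
      using i3 i4 by (simp add: mult.commute)
    have eq: "(\<integral>x. s x * (a x - b x) \<partial>M) = (\<integral>x. (s x - k x) * f x \<partial>M)"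
    proof -
      have "(\<integral>x. s x * (a x - b x) \<partial>M) = (\<integral>x. s x * a x \<partial>M) - (\<integral>x. s x * b x \<partial>M)"
        using sa_int sb_int by (simp add: right_diff_distrib)
      also have "\<dots> = (\<integral>x. s x * f x \<partial>M) - (\<integral>x. k x * f x \<partial>M)" using i2 kb_eq by simp
      also have "\<dots> = (\<integral>x. (s x - k x) * f x \<partial>M)"
        using sf_int kf_int by (simp add: left_diff_distrib)
      finally show ?thesis .
    qed
    have skf_int: "integrable M (\<lambda>x. (s x - k x) * f x)"
      using sf_int kf_int by (simp add: left_diff_distrib)
    have i5: "(\<integral>x. f x \<partial>M) \<le> (\<integral>x. (s x - k x) * f x \<partial>M)"
    proof (rule integral_mono_AE[OF f_int skf_int])
      show "AE x in M. f x \<le> (s x - k x) * f x"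
        using onD
      proof eventually_elim
        case (elim x)
        show ?case
        proof (cases "x \<in> D")
          case True
          then have "s x - k x \<ge> 1" using elim unfolding k_def by auto
          then show ?thesis using f_nn[of x] by (metis mult_le_cancel_right1 not_le order_less_le_trans zero_less_one mult_right_mono mult_1 mult.commute)
        qed (simp add: f_def)
      qed
    qed
    have "(\<integral>x. \<bar>a x - b x\<bar> \<partial>M) \<ge> 1" using i1 i5 eq intf by linarith
    then have "L1_norm M (\<lambda>x. a x - b x) \<ge> 1" unfolding L1_norm_def by simp
    with \<open>L1_norm M (\<lambda>x. a x - b x) \<le> opnorm_L1 M A B\<close> show ?thesis by (meson order.trans)
  qed
  show ?thesis using L1 Linf by simp
qed

lemma key:
  assumes A: "sigma_subfield M A" and B: "sigma_subfield M B" and F: "F \<in> A" "F \<notin> B"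
  shows "opnorm_L1 M A B \<ge> 1 \<and> opnorm_Linf M A B \<ge> 1/2"
proof -
  note sfA = sf_basic[OF prob_space_axioms A] and sfB = sf_basic[OF prob_space_axioms B]
  interpret SB: sigma_finite_subalgebra M "sigma (space M) B" using sfB by auto
  have FM[measurable]: "F \<in> sets M" using A F unfolding sigma_subfield_def by auto
  define s where "s = (\<lambda>x. 2 * indicator F x - (1::real))"
  have s_meas: "s \<in> borel_measurable (sigma (space M) A)"
  proof -
    have "F \<in> sets (sigma (space M) A)" using sfA F by auto
    then show ?thesis unfolding s_def by measurable
  qed
  have sM[measurable]: "s \<in> borel_measurable M" unfolding s_def by measurable
  have s_bd: "\<And>x. \<bar>s x\<bar> \<le> 1" unfolding s_def by (auto simp: indicator_def)
  have s_int: "integrable M s" by (rule integrable_const_bound[where B=1]) (use s_bd in auto)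
  define k where "k = real_cond_exp M (sigma (space M) B) s"
  have kM[measurable]: "k \<in> borel_measurable M" unfolding k_def by (rule borel_measurable_cond_exp2)
  have kB: "k \<in> borel_measurable (sigma (space M) B)" unfolding k_def by (rule borel_measurable_cond_exp)
  define D1 where "D1 = {x\<in>space M. x \<in> F \<and> k x \<le> 0}"
  define D2 where "D2 = {x\<in>space M. x \<notin> F \<and> k x \<ge> 0}"
  have D1M[measurable]: "D1 \<in> sets M" unfolding D1_def by measurable
  have D2M[measurable]: "D2 \<in> sets M" unfolding D2_def by measurable
  show ?thesis
  proof (cases "prob D1 > 0")
    case True
    show ?thesis
    proof (rule core[OF A B s_meas s_bd D1M True])
      show "AE x in M. x \<in> D1 \<longrightarrow> s x = 1 \<and> real_cond_exp M (sigma (space M) B) s x \<le> 0"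
        by (auto simp: D1_def s_def k_def)
    qed
  next
    case nD1: False
    show ?thesis
    proof (cases "prob D2 > 0")
      case True
      define s' where "s' = (\<lambda>x. (-1) * s x)"
      have s'_meas: "s' \<in> borel_measurable (sigma (space M) A)" unfolding s'_def using s_meas by measurable
      have s'_bd: "\<And>x. \<bar>s' x\<bar> \<le> 1" unfolding s'_def using s_bd by simp
      have ae: "AE x in M. real_cond_exp M (sigma (space M) B) s' x = (-1) * k x"
        unfolding s'_def k_def by (rule SB.real_cond_exp_cmult[OF s_int])
      show ?thesis
      proof (rule core[OF A B s'_meas s'_bd D2M True])
        show "AE x in M. x \<in> D2 \<longrightarrow> s' x = 1 \<and> real_cond_exp M (sigma (space M) B) s' x \<le> 0"
          using ae by eventually_elim (auto simp: D2_def s_def s'_def)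
      qed
    next
    case nD2: False
      have D1N: "D1 \<in> null_sets M" using nD1 D1M
        by (simp add: null_sets_def emeasure_eq_measure not_less measure_nonneg order_antisym)
      have D2N: "D2 \<in> null_sets M" using nD2 D2M
        by (simp add: null_sets_def emeasure_eq_measure not_less measure_nonneg order_antisym)
      define E where "E = {x\<in>space M. k x > 0}"
      have EB: "E \<in> B"
      proof -
        have "{x\<in>space (sigma (space M) B). k x > 0} \<in> sets (sigma (space M) B)" using kB by measurable
        then show ?thesis using sfB unfolding E_def by simp
      qed
      have EM: "E \<in> sets M" unfolding E_def by measurable
      have "F - E \<in> null_sets M"
        by (rule null_sets_subset[OF D1N]) (use EM sets.sets_into_space[OF FM] in \<open>auto simp: D1_def E_def\<close>)
      then have N1: "F - E \<in> B" by (rule null_in_sf[OF B])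
      have "E - F \<in> null_sets M"
        by (rule null_sets_subset[OF D2N]) (use EM in \<open>auto simp: D2_def E_def\<close>)
      then have N2: "E - F \<in> B" by (rule null_in_sf[OF B])
      interpret sB: sigma_algebra "space M" B using B unfolding sigma_subfield_def by auto
      have "(E - (E - F)) \<union> (F - E) \<in> B" using EB N1 N2 by auto
      moreover have "(E - (E - F)) \<union> (F - E) = F" by auto
      ultimately show ?thesis using F by simp
    qed
  qed
qed

end

theorem mainTheorem12:
  fixes M :: "'a measure"
  assumes "prob_space M"
  shows "(\<forall>A B. sigma_subfield M A \<and> sigma_subfield M B \<and> A \<noteq> B \<longrightarrow>
            opnorm_L1 M A B \<ge> 1 \<and> opnorm_Linf M A B \<ge> 1/2)
     \<and> (\<forall>Bs :: nat \<Rightarrow> 'a set set. (\<forall>n. sigma_subfield M (Bs n)) \<and>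
            ((\<lambda>n. opnorm_L1 M (Bs n) (Bs 0)) \<longlonglongrightarrow> 0 \<or>
             (\<lambda>n. opnorm_Linf M (Bs n) (Bs 0)) \<longlonglongrightarrow> 0)
          \<longrightarrow> (\<forall>\<^sub>F n in sequentially. Bs n = Bs 0))"
proof -
  interpret prob_space M by (rule assms)
  have P1: "opnorm_L1 M A B \<ge> 1 \<and> opnorm_Linf M A B \<ge> 1/2"
    if A: "sigma_subfield M A" and B: "sigma_subfield M B" and ne: "A \<noteq> B" for A B
  proof -
    obtain F where "(F \<in> A \<and> F \<notin> B) \<or> (F \<in> B \<and> F \<notin> A)" using ne by blast
    then show ?thesis
    proof
      assume "F \<in> A \<and> F \<notin> B" then show ?thesis using key[OF A B] by auto
    next
      assume "F \<in> B \<and> F \<notin> A" then show ?thesis using key[OF B A] opnorm_sym[of M A B] by auto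
    qed
  qed
  have half: "(0::ereal) < 1/2" by (simp add: divide_ereal_def)
  show ?thesis
  proof (intro conjI allI impI)
    fix A B assume "sigma_subfield M A \<and> sigma_subfield M B \<and> A \<noteq> B"
    then show "opnorm_L1 M A B \<ge> 1" "opnorm_Linf M A B \<ge> 1/2" using P1 by auto
  next
    fix Bs :: "nat \<Rightarrow> 'a set set"
    assume H: "(\<forall>n. sigma_subfield M (Bs n)) \<and>
            ((\<lambda>n. opnorm_L1 M (Bs n) (Bs 0)) \<longlonglongrightarrow> 0 \<or>
             (\<lambda>n. opnorm_Linf M (Bs n) (Bs 0)) \<longlonglongrightarrow> 0)"
    then have sf: "\<And>n. sigma_subfield M (Bs n)" by auto
    from H have "(\<lambda>n. opnorm_L1 M (Bs n) (Bs 0)) \<longlonglongrightarrow> 0 \<or>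
             (\<lambda>n. opnorm_Linf M (Bs n) (Bs 0)) \<longlonglongrightarrow> 0" by auto
    then show "\<forall>\<^sub>F n in sequentially. Bs n = Bs 0"
    proof
      assume "(\<lambda>n. opnorm_L1 M (Bs n) (Bs 0)) \<longlonglongrightarrow> 0"
      then have "\<forall>\<^sub>F n in sequentially. opnorm_L1 M (Bs n) (Bs 0) < 1"
        by (rule order_tendstoD(2)) simp
      then show ?thesis
        by eventually_elim (use P1[OF sf sf] in \<open>force simp: not_le[symmetric]\<close>)
    next
      assume "(\<lambda>n. opnorm_Linf M (Bs n) (Bs 0)) \<longlonglongrightarrow> 0"
      then have "\<forall>\<^sub>F n in sequentially. opnorm_Linf M (Bs n) (Bs 0) < 1/2"
        by (rule order_tendstoD(2)) (rule half)
      then show ?thesis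
        by eventually_elim (use P1[OF sf sf] in \<open>force simp: not_le[symmetric]\<close>)
    qed
  qed
qed

end
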